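(* Let $G$ be the directed graph on nodes $v_1,\dots,v_n$ with edges $(v_i,v_{i+1})$ for $1\le i\le n-1$ and $(v_i,v_j)$ for all $1\le j<i\le n$. Let $q=1/\sqrt n$. There is an absolute constant $c>0$ such that the convergence time of the \textsc{Random Pick} process on $G$ started from a $q$-random state is at least $c/(q\ln n)^2=c\,n/(\ln n)^2$ with probability $1-o(1)$ as $n\to\infty$.
   Context: In a $q$-random state each node is independently colored (red or blue, arbitrarily) with probability $q$ and uncolored otherwise. \textsc{Random Pick} process: in each round every node with at least one out-neighbor picks an out-neighbor uniformly at random, independently; an uncolored node adopts the color of its pick if the pick is colored, and all other nodes keep their color. A state is stable if no uncolored node has a colored out-neighbor; the convergence time is the first round $t\ge0$ at which the state is stable. *)

theory Defs
  imports "HOL-Probability.Probability"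
begin

datatype color = Red | Blue

type_synonym state = "nat \<Rightarrow> color option"

definition G_nodes :: "nat \<Rightarrow> nat set" where
  "G_nodes n = {1..n}"

definition G_out :: "nat \<Rightarrow> nat \<Rightarrow> nat set" where
  "G_out n i = {j. (1 \<le> i \<and> i \<le> n - 1 \<and> j = i + 1) \<or> (1 \<le> j \<and> j < i \<and> i \<le> n)}"

definition stable :: "nat set \<Rightarrow> (nat \<Rightarrow> nat set) \<Rightarrow> state \<Rightarrow> bool" where
  "stable V out s \<longleftrightarrow> (\<forall>v\<in>V. s v = None \<longrightarrow> (\<forall>u\<in>out v. s u = None))"

definition random_pick_step :: "nat set \<Rightarrow> (nat \<Rightarrow> nat set) \<Rightarrow> state \<Rightarrow> state pmf" where
  "random_pick_step V out s =
     map_pmf (\<lambda>pick v. if v \<in> V \<and> out v \<noteq> {} \<and> s v = None then s (pick v) else s v)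
       (Pi_pmf {v\<in>V. out v \<noteq> {}} 0 (\<lambda>v. pmf_of_set (out v)))"

definition q_random_state :: "nat set \<Rightarrow> real \<Rightarrow> (nat \<Rightarrow> color) \<Rightarrow> state pmf" where
  "q_random_state V q col =
     Pi_pmf V None (\<lambda>v. map_pmf (\<lambda>b. if b then Some (col v) else None) (bernoulli_pmf q))"

fun trajectory :: "nat set \<Rightarrow> (nat \<Rightarrow> nat set) \<Rightarrow> state pmf \<Rightarrow> nat \<Rightarrow> state list pmf" where
  "trajectory V out init 0 = map_pmf (\<lambda>s. [s]) init"
| "trajectory V out init (Suc t) =
     bind_pmf (trajectory V out init t)
       (\<lambda>xs. map_pmf (\<lambda>s'. xs @ [s']) (random_pick_step V out (last xs)))"

text \<open>Probability that the convergence time is at least the real number x, i.e. that none of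
  the states s_t with t < x is stable.\<close>
definition prob_conv_time_ge :: "nat set \<Rightarrow> (nat \<Rightarrow> nat set) \<Rightarrow> state pmf \<Rightarrow> real \<Rightarrow> real" where
  "prob_conv_time_ge V out init x =
     measure_pmf.prob (trajectory V out init (nat \<lceil>x\<rceil>))
       {xs. \<forall>t. real t < x \<longrightarrow> \<not> stable V out (xs ! t)}"

end

theory Submission
  imports Defs "HOL-Real_Asymp.Real_Asymp"
begin


definition minc :: "nat \<Rightarrow> state \<Rightarrow> nat" where
  "minc n s = (LEAST i. 1 \<le> i \<and> (i \<le> n \<longrightarrow> s i \<noteq> None))"

lemma minc_ex: "1 \<le> minc n s \<and> (minc n s \<le> n \<longrightarrow> s (minc n s) \<noteq> None)"
  unfolding minc_def by (rule LeastI[of _ "n+1"]) auto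

lemma minc_ge1: "1 \<le> minc n s" using minc_ex by blast

lemma minc_le: "minc n s \<le> n + 1"
  unfolding minc_def by (rule Least_le) auto

lemma minc_col: "minc n s \<le> n \<Longrightarrow> s (minc n s) \<noteq> None" using minc_ex by blast

lemma minc_below: "1 \<le> i \<Longrightarrow> i < minc n s \<Longrightarrow> s i = None"
proof -
  assume a: "1 \<le> i" "i < minc n s"
  have "\<not> (1 \<le> i \<and> (i \<le> n \<longrightarrow> s i \<noteq> None))"
    using a(2) unfolding minc_def by (rule not_less_Least)
  with a show ?thesis by auto
qed

lemma minc_eqI:
  assumes "1 \<le> a" "a \<le> n + 1" "a \<le> n \<Longrightarrow> s a \<noteq> None" "\<And>i. 1 \<le> i \<Longrightarrow> i < a \<Longrightarrow> s i = None"
  shows "minc n s = a"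
  unfolding minc_def
proof (rule Least_equality)
  show "1 \<le> a \<and> (a \<le> n \<longrightarrow> s a \<noteq> None)" using assms by auto
next
  fix y assume y: "1 \<le> y \<and> (y \<le> n \<longrightarrow> s y \<noteq> None)"
  show "a \<le> y"
  proof (rule ccontr)
    assume "\<not> a \<le> y"
    hence "y < a" by simp
    hence "s y = None" "y \<le> n" using assms(2,4) y by auto
    thus False using y by blast
  qed
qed

lemma G_out_iff: "j \<in> G_out n i \<longleftrightarrow> (1 \<le> i \<and> i < n \<and> j = i+1) \<or> (1 \<le> j \<and> j < i \<and> i \<le> n)"
  unfolding G_out_def by auto

lemma G_out_sub: "G_out n i \<subseteq> {1..n}"
  by (auto simp: G_out_iff)

lemma G_out_finite: "finite (G_out n i)"
  using G_out_sub finite_subset by blast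

lemma G_out_pred: "2 \<le> m \<Longrightarrow> m \<le> n \<Longrightarrow> G_out n (m-1) = insert m {1..<m-1}"
  by (auto simp: G_out_iff)

lemma G_out_card: "2 \<le> m \<Longrightarrow> m \<le> n \<Longrightarrow> card (G_out n (m-1)) = m - 1"
  using G_out_pred[of m n] by (simp add: card_insert_if)

lemma stable_minc:
  assumes "stable (G_nodes n) (G_out n) s"
  shows "minc n s = 1 \<or> minc n s = n + 1"
proof (rule ccontr)
  let ?m = "minc n s"
  assume "\<not> ?thesis"
  hence m: "2 \<le> ?m" "?m \<le> n" using minc_ge1[of n s] minc_le[of n s] by auto
  have "s (?m - 1) = None" using m by (intro minc_below[of "?m - 1" n s]) auto
  moreover have "?m - 1 \<in> G_nodes n" using m by (auto simp: G_nodes_def)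
  moreover have "?m \<in> G_out n (?m - 1)" using m by (auto simp: G_out_iff)
  moreover have "s ?m \<noteq> None" using m minc_col[of n s] by blast
  ultimately show False using assms unfolding stable_def by metis
qed

definition upd :: "nat \<Rightarrow> state \<Rightarrow> (nat \<Rightarrow> nat) \<Rightarrow> state" where
  "upd n s f = (\<lambda>v. if v \<in> G_nodes n \<and> G_out n v \<noteq> {} \<and> s v = None then s (f v) else s v)"

lemma step_eq: "random_pick_step (G_nodes n) (G_out n) s =
   map_pmf (upd n s) (Pi_pmf {v\<in>G_nodes n. G_out n v \<noteq> {}} 0 (\<lambda>v. pmf_of_set (G_out n v)))"
  unfolding random_pick_step_def upd_def by simp

lemma minc_upd:
  assumes f: "\<And>v. v \<in> G_nodes n \<Longrightarrow> G_out n v \<noteq> {} \<Longrightarrow> f v \<in> G_out n v"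
  shows "minc n (upd n s f) = (let m = minc n s in if 2 \<le> m \<and> m \<le> n \<and> f (m-1) = m then m - 1 else m)"
proof -
  define m where "m = minc n s"
  have m1: "1 \<le> m" "m \<le> n+1" using minc_ge1 minc_le m_def by auto
  have low: "upd n s f i = None" if i: "1 \<le> i" "i < m - 1 \<or> (i = m - 1 \<and> f i \<noteq> m)" for i
  proof -
    have im: "i < m" using i m1 by auto
    have si: "s i = None" using i(1) im unfolding m_def by (rule minc_below)
    show ?thesis
    proof (cases "i \<in> G_nodes n \<and> G_out n i \<noteq> {}")
      case True
      hence "f i \<in> G_out n i" using f by blast
      hence "(1 \<le> i \<and> i < n \<and> f i = i+1) \<or> (1 \<le> f i \<and> f i < i \<and> i \<le> n)"
        by (simp only: G_out_iff)
      hence "1 \<le> f i \<and> f i < m"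
      proof
        assume "1 \<le> i \<and> i < n \<and> f i = i+1"
        thus ?thesis using i by auto
      next
        assume "1 \<le> f i \<and> f i < i \<and> i \<le> n"
        thus ?thesis using im by auto
      qed
      hence "s (f i) = None" using minc_below[of "f i" n s] unfolding m_def[symmetric] by blast
      thus ?thesis using si by (simp add: upd_def)
    qed (use si in \<open>auto simp: upd_def\<close>)
  qed
  show ?thesis
  proof (cases "2 \<le> m \<and> m \<le> n \<and> f (m-1) = m")
    case True
    have "minc n (upd n s f) = m - 1"
    proof (rule minc_eqI)
      have "m - 1 \<in> G_nodes n" using True by (auto simp: G_nodes_def)
      moreover have "m \<in> G_out n (m-1)" using True by (auto simp: G_out_iff)
      hence "G_out n (m-1) \<noteq> {}" by blast
      moreover have "s (m-1) = None" by (rule minc_below[of "m-1" n s]) (use True in \<open>auto simp: m_def\<close>)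
      moreover have "s m \<noteq> None" using True minc_col[of n s] unfolding m_def[symmetric] by blast
      ultimately show "upd n s f (m-1) \<noteq> None" using True by (simp add: upd_def)
    next
      show "1 \<le> m - 1" using True by linarith
      show "m - 1 \<le> n + 1" using True by linarith
      show "upd n s f i = None" if "1 \<le> i" "i < m - 1" for i
        using low[of i] that by blast
    qed
    thus ?thesis using True by (simp add: m_def[symmetric] Let_def)
  next
    case False
    have "minc n (upd n s f) = m"
    proof (rule minc_eqI)
      show "upd n s f m \<noteq> None" if "m \<le> n"
        using that minc_col[of n s] unfolding m_def[symmetric] by (auto simp: upd_def)
      show "upd n s f i = None" if "1 \<le> i" "i < m" for i
      proof (cases "i < m - 1")
        case True thus ?thesis using low[of i] that by blast
      next
        case F: False
        hence im: "i = m - 1" using that by auto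
        show ?thesis
        proof (cases "2 \<le> m \<and> m \<le> n")
          case True
          hence "f i \<noteq> m" using False im by simp
          thus ?thesis using low[of i] that im by blast
        next
          case F2: False
          hence "m = n + 1" using that m1 by auto
          hence "i = n" using im by simp
          have si: "s i = None" using that minc_below[of i n s] unfolding m_def[symmetric] by blast
          show ?thesis
          proof (cases "i \<in> G_nodes n \<and> G_out n i \<noteq> {}")
            case True
            hence "f i \<in> G_out n i" using f by blast
            hence "1 \<le> f i \<and> f i < m" using \<open>i = n\<close> \<open>m = n+1\<close> by (auto simp: G_out_iff)
            hence "s (f i) = None" using minc_below[of "f i" n s] unfolding m_def[symmetric] by blast
            thus ?thesis using si by (simp add: upd_def)
          qed (use si in \<open>auto simp: upd_def\<close>)
        qed
      qed
    qed (use m1 in simp_all)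
    thus ?thesis using False by (auto simp: m_def[symmetric] Let_def)
  qed
qed



lemma finite_D: "finite {v\<in>G_nodes n. G_out n v \<noteq> {}}"
  by (simp add: G_nodes_def)

lemma pick_support:
  assumes "f \<in> set_pmf (Pi_pmf {v\<in>G_nodes n. G_out n v \<noteq> {}} 0 (\<lambda>v. pmf_of_set (G_out n v)))"
    "v \<in> G_nodes n" "G_out n v \<noteq> {}"
  shows "f v \<in> G_out n v"
  using assms by (auto simp: set_Pi_pmf[OF finite_D] PiE_dflt_def G_out_finite)

lemma step_mono:
  assumes "s' \<in> set_pmf (random_pick_step (G_nodes n) (G_out n) s)"
  shows "minc n s' \<le> minc n s"
proof -
  obtain f where f: "f \<in> set_pmf (Pi_pmf {v\<in>G_nodes n. G_out n v \<noteq> {}} 0 (\<lambda>v. pmf_of_set (G_out n v)))"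
    and s': "s' = upd n s f"
    using assms by (auto simp: step_eq)
  have "minc n s' = (let m = minc n s in if 2 \<le> m \<and> m \<le> n \<and> f (m-1) = m then m - 1 else m)"
    unfolding s' by (rule minc_upd) (rule pick_support[OF f])
  thus ?thesis by (simp add: Let_def)
qed

definition gpot :: "nat \<Rightarrow> nat \<Rightarrow> real" where
  "gpot M m = 2 ^ (2*M - max m M)"

lemma gpot_pos: "0 < gpot M m" by (simp add: gpot_def)

lemma gpot_le: "gpot M m \<le> 2 ^ (2*M)"
  unfolding gpot_def by (rule power_increasing) auto

lemma gpot_pred: "gpot M (m - 1) \<le> 2 * gpot M m"
proof -
  have "2*M - max (m-1) M \<le> Suc (2*M - max m M)" by simp
  hence "(2::real) ^ (2*M - max (m-1) M) \<le> 2 ^ Suc (2*M - max m M)"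
    by (rule power_increasing) auto
  thus ?thesis by (simp add: gpot_def)
qed

lemma gpot_pred_eq: "m \<le> M \<Longrightarrow> gpot M (m - 1) = gpot M m"
  by (simp add: gpot_def max_def)

lemma gpot_step:
  assumes M: "1 \<le> M" and m: "2 \<le> m"
  shows "gpot M (m-1) + (real m - 2) * gpot M m \<le> (1 + 1/M) * gpot M m * (real m - 1)"
proof (cases "M \<le> m - 1")
  case True
  have g: "0 < gpot M m" by (rule gpot_pos)
  have "gpot M (m-1) + (real m - 2) * gpot M m \<le> 2 * gpot M m + (real m - 2) * gpot M m"
    using gpot_pred[of M m] by simp
  also have "\<dots> = gpot M m * real m" by (simp add: algebra_simps)
  also have "\<dots> \<le> gpot M m * ((1 + 1/M) * (real m - 1))"
  proof (rule mult_left_mono)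
    have "real M \<le> real m - 1" using True m by linarith
    hence "1 \<le> (real m - 1) / M" using M by (simp add: field_simps)
    thus "real m \<le> (1 + 1/M) * (real m - 1)" by (simp add: algebra_simps)
  qed (use g in simp)
  finally show ?thesis by (simp add: algebra_simps)
next
  case False
  hence "gpot M (m-1) = gpot M m" by (intro gpot_pred_eq) linarith
  moreover have "0 < gpot M m" by (rule gpot_pos)
  moreover have "0 \<le> real m - 1" using m by simp
  ultimately have "gpot M (m-1) + (real m - 2) * gpot M m = 1 * gpot M m * (real m - 1)"
    by (simp add: algebra_simps)
  also have "\<dots> \<le> (1 + 1/M) * gpot M m * (real m - 1)"
    using \<open>0 < gpot M m\<close> \<open>0 \<le> real m - 1\<close> by (intro mult_right_mono) auto
  finally show ?thesis .
qed

lemma step_exp: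
  assumes M: "1 \<le> M"
  shows "measure_pmf.expectation (random_pick_step (G_nodes n) (G_out n) s) (\<lambda>s'. gpot M (minc n s'))
          \<le> (1 + 1/M) * gpot M (minc n s)"
proof -
  define D where "D = {v\<in>G_nodes n. G_out n v \<noteq> {}}"
  define P where "P = Pi_pmf D 0 (\<lambda>v. pmf_of_set (G_out n v))"
  define m where "m = minc n s"
  define h where "h = (\<lambda>j. gpot M (if 2 \<le> m \<and> m \<le> n \<and> j = m then m - 1 else m))"
  have fD: "finite D" unfolding D_def by (rule finite_D)
  have "measure_pmf.expectation (random_pick_step (G_nodes n) (G_out n) s) (\<lambda>s'. gpot M (minc n s'))
      = measure_pmf.expectation P (\<lambda>f. gpot M (minc n (upd n s f)))"
    by (simp add: step_eq P_def D_def)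
  also have "\<dots> = measure_pmf.expectation P (\<lambda>f. h (f (m-1)))"
  proof (rule integral_cong_AE)
    show "AE f in measure_pmf P. gpot M (minc n (upd n s f)) = h (f (m-1))"
      unfolding AE_measure_pmf_iff
    proof
      fix f assume f: "f \<in> set_pmf P"
      have "minc n (upd n s f) = (let m = minc n s in if 2 \<le> m \<and> m \<le> n \<and> f (m-1) = m then m - 1 else m)"
        by (rule minc_upd) (rule pick_support[OF f[unfolded P_def D_def]])
      thus "gpot M (minc n (upd n s f)) = h (f (m-1))"
        by (simp add: h_def m_def Let_def)
    qed
  qed simp_all
  also have "\<dots> = measure_pmf.expectation (map_pmf (\<lambda>f. f (m-1)) P) h" by simp
  also have "\<dots> \<le> (1 + 1/M) * gpot M m"
  proof (cases "2 \<le> m \<and> m \<le> n")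
    case True
    have m2: "2 \<le> m" "m \<le> n" using True by auto
    have "m \<in> G_out n (m-1)" using True by (auto simp: G_out_iff)
    hence "m - 1 \<in> D" using True by (auto simp: D_def G_nodes_def)
    hence mp: "map_pmf (\<lambda>f. f (m-1)) P = pmf_of_set (G_out n (m-1))"
      by (simp add: P_def Pi_pmf_component fD)
    have ne: "G_out n (m-1) \<noteq> {}" "finite (G_out n (m-1))"
      using \<open>m - 1 \<in> D\<close> by (auto simp: D_def G_out_finite)
    have notin: "m \<notin> {1..<m-1}" by auto
    have sum: "(\<Sum>j\<in>G_out n (m-1). h j) = gpot M (m-1) + (real m - 2) * gpot M m"
    proof -
      have "(\<Sum>j\<in>G_out n (m-1). h j) = h m + (\<Sum>j\<in>{1..<m-1}. h j)"
        unfolding G_out_pred[OF m2] using notin by simp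
      also have "(\<Sum>j\<in>{1..<m-1}. h j) = (\<Sum>j\<in>{1..<m-1}. gpot M m)"
        by (intro sum.cong) (auto simp: h_def)
      also have "\<dots> = (real m - 2) * gpot M m" using True by (simp add: of_nat_diff)
      finally show ?thesis using True by (simp add: h_def)
    qed
    have "measure_pmf.expectation (map_pmf (\<lambda>f. f (m-1)) P) h
        = (gpot M (m-1) + (real m - 2) * gpot M m) / (real m - 1)"
      unfolding mp integral_pmf_of_set[OF ne] sum G_out_card[OF m2] using m2 by (simp add: of_nat_diff)
    also have "\<dots> \<le> (1 + 1/M) * gpot M m"
      using gpot_step[OF M, of m] True by (simp add: divide_le_eq)
    finally show ?thesis .
  next
    case False
    hence "h = (\<lambda>_. gpot M m)" by (auto simp: h_def)
    hence "measure_pmf.expectation (map_pmf (\<lambda>f. f (m-1)) P) h = gpot M m" by simp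
    also have "\<dots> \<le> (1 + 1/M) * gpot M m" using gpot_pos[of M m] by simp
    finally show ?thesis .
  qed
  finally show ?thesis by (simp add: m_def)
qed



lemma traj_len: "xs \<in> set_pmf (trajectory V out init t) \<Longrightarrow> length xs = Suc t"
  by (induction t arbitrary: xs) auto

lemma traj_mono:
  "xs \<in> set_pmf (trajectory (G_nodes n) (G_out n) init t) \<Longrightarrow> i \<le> j \<Longrightarrow> j \<le> t
   \<Longrightarrow> minc n (xs!j) \<le> minc n (xs!i)"
proof (induction t arbitrary: xs i j)
  case 0 thus ?case by simp
next
  case (Suc t)
  from Suc.prems(1) obtain ys s' where ys: "ys \<in> set_pmf (trajectory (G_nodes n) (G_out n) init t)"
    and s': "s' \<in> set_pmf (random_pick_step (G_nodes n) (G_out n) (last ys))" and xs: "xs = ys @ [s']"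
    by auto
  have len: "length ys = Suc t" using traj_len[OF ys] .
  have nth: "xs!k = ys!k" if "k \<le> t" for k using that len xs by (simp add: nth_append)
  have xsl: "xs!(Suc t) = s'" using len xs by (simp add: nth_append)
  have yne: "ys \<noteq> []" using len by auto
  have lst: "last ys = ys!t" using len by (simp add: last_conv_nth[OF yne])
  show ?case
  proof (cases "j \<le> t")
    case True
    thus ?thesis using Suc.IH[OF ys Suc.prems(2) True] nth Suc.prems(2) by simp
  next
    case False
    hence j: "j = Suc t" using Suc.prems(3) by simp
    show ?thesis
    proof (cases "i = Suc t")
      case True thus ?thesis using j by simp
    next
      case False
      hence i: "i \<le> t" using Suc.prems(2) j by simp
      have "minc n (xs!j) = minc n s'" using j xsl by simp
      also have "\<dots> \<le> minc n (last ys)" by (rule step_mono[OF s'])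
      also have "\<dots> = minc n (ys!t)" using lst by simp
      also have "\<dots> \<le> minc n (ys!i)" by (rule Suc.IH[OF ys i order.refl])
      also have "\<dots> = minc n (xs!i)" using nth[OF i] by simp
      finally show ?thesis .
    qed
  qed
qed

lemma traj_hd: "map_pmf (\<lambda>xs. xs!0) (trajectory V out init t) = init"
proof (induction t)
  case 0 thus ?case by (simp add: map_pmf_comp)
next
  case (Suc t)
  have "map_pmf (\<lambda>xs. xs!0) (trajectory V out init (Suc t))
      = bind_pmf (trajectory V out init t) (\<lambda>xs. map_pmf (\<lambda>s'. (xs@[s'])!0) (random_pick_step V out (last xs)))"
    by (simp add: map_bind_pmf map_pmf_comp)
  also have "\<dots> = bind_pmf (trajectory V out init t) (\<lambda>xs. return_pmf (xs!0))"
  proof (rule bind_pmf_cong)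
    fix xs assume "xs \<in> set_pmf (trajectory V out init t)"
    hence "xs \<noteq> []" using traj_len by fastforce
    thus "map_pmf (\<lambda>s'. (xs@[s'])!0) (random_pick_step V out (last xs)) = return_pmf (xs!0)"
      by (simp add: nth_append)
  qed simp
  also have "\<dots> = map_pmf (\<lambda>xs. xs!0) (trajectory V out init t)" by (simp add: map_pmf_def)
  finally show ?case using Suc.IH by simp
qed

lemma traj_hd_prob:
  "measure_pmf.prob (trajectory V out init t) {xs. P (xs!0)} = measure_pmf.prob init {s. P s}"
proof -
  have "measure_pmf.prob (trajectory V out init t) {xs. P (xs!0)}
      = measure_pmf.prob (map_pmf (\<lambda>xs. xs!0) (trajectory V out init t)) {s. P s}"
    by (simp add: vimage_def)
  thus ?thesis by (simp only: traj_hd)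
qed

definition Phi :: "nat \<Rightarrow> nat \<Rightarrow> state list \<Rightarrow> real" where
  "Phi n M xs = (if 2*M \<le> minc n (xs!0) then gpot M (minc n (last xs)) else 0)"

lemma Phi_nonneg: "0 \<le> Phi n M xs"
  using gpot_pos by (simp add: Phi_def less_imp_le)

lemma traj_pot:
  assumes M: "1 \<le> M"
  shows "(\<integral>\<^sup>+xs. ennreal (Phi n M xs) \<partial>trajectory (G_nodes n) (G_out n) init t) \<le> ennreal ((1 + 1/real M)^t)"
proof (induction t)
  case 0
  have "(\<integral>\<^sup>+xs. ennreal (Phi n M xs) \<partial>trajectory (G_nodes n) (G_out n) init 0)
      = (\<integral>\<^sup>+s. ennreal (Phi n M [s]) \<partial>init)" by simp
  also have "\<dots> \<le> (\<integral>\<^sup>+s. 1 \<partial>init)"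
    by (intro nn_integral_mono) (auto simp: Phi_def gpot_def)
  also have "\<dots> = 1" by simp
  finally show ?case by simp
next
  case (Suc t)
  let ?st = "\<lambda>s. random_pick_step (G_nodes n) (G_out n) s"
  let ?T = "trajectory (G_nodes n) (G_out n) init t"
  let ?c = "1 + 1 / real M"
  have c0: "0 \<le> ?c" by simp
  have "(\<integral>\<^sup>+xs. ennreal (Phi n M xs) \<partial>trajectory (G_nodes n) (G_out n) init (Suc t))
      = (\<integral>\<^sup>+xs. \<integral>\<^sup>+s'. ennreal (Phi n M (xs@[s'])) \<partial>?st (last xs) \<partial>?T)" by simp
  also have "\<dots> \<le> (\<integral>\<^sup>+xs. ennreal ?c * ennreal (Phi n M xs) \<partial>?T)"
  proof (rule nn_integral_mono_AE)
    show "AE xs in measure_pmf ?T. (\<integral>\<^sup>+s'. ennreal (Phi n M (xs@[s'])) \<partial>?st (last xs))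
            \<le> ennreal ?c * ennreal (Phi n M xs)"
      unfolding AE_measure_pmf_iff
    proof
      fix xs assume xs: "xs \<in> set_pmf ?T"
      hence ne: "xs \<noteq> []" using traj_len by fastforce
      have eq: "Phi n M (xs@[s']) = (if 2*M \<le> minc n (xs!0) then gpot M (minc n s') else 0)" for s'
        using ne by (simp add: Phi_def nth_append)
      show "(\<integral>\<^sup>+s'. ennreal (Phi n M (xs@[s'])) \<partial>?st (last xs)) \<le> ennreal ?c * ennreal (Phi n M xs)"
      proof (cases "2*M \<le> minc n (xs!0)")
        case True
        have int: "integrable (measure_pmf (?st (last xs))) (\<lambda>s'. gpot M (minc n s'))"
          by (rule measure_pmf.integrable_const_bound[where B="2^(2*M)"])
             (auto simp: gpot_le abs_of_pos[OF gpot_pos] intro!: AE_I2)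
        have "(\<integral>\<^sup>+s'. ennreal (Phi n M (xs@[s'])) \<partial>?st (last xs))
            = (\<integral>\<^sup>+s'. ennreal (gpot M (minc n s')) \<partial>?st (last xs))"
          using True by (simp add: eq)
        also have "\<dots> = ennreal (measure_pmf.expectation (?st (last xs)) (\<lambda>s'. gpot M (minc n s')))"
          by (rule nn_integral_eq_integral[OF int]) (auto simp: less_imp_le[OF gpot_pos])
        also have "\<dots> \<le> ennreal (?c * gpot M (minc n (last xs)))"
          using step_exp[OF M] by (simp add: ennreal_leI)
        also have "\<dots> = ennreal ?c * ennreal (Phi n M xs)"
        proof -
          have "Phi n M xs = gpot M (minc n (last xs))" using True by (simp add: Phi_def)
          thus ?thesis by (simp only: ennreal_mult[OF c0 less_imp_le[OF gpot_pos]])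
        qed
        finally show ?thesis .
      next
        case False
        thus ?thesis by (simp add: eq)
      qed
    qed
  qed
  also have "\<dots> = ennreal ?c * (\<integral>\<^sup>+xs. ennreal (Phi n M xs) \<partial>?T)"
    by (rule nn_integral_cmult) simp
  also have "\<dots> \<le> ennreal ?c * ennreal (?c ^ t)"
    by (rule mult_left_mono[OF Suc.IH]) simp
  also have "\<dots> = ennreal (?c ^ Suc t)"
    by (simp only: power_Suc ennreal_mult[OF c0 zero_le_power[OF c0]])
  finally show ?case .
qed

lemma traj_A:
  assumes M: "1 \<le> M"
  shows "measure_pmf.prob (trajectory (G_nodes n) (G_out n) init N)
           {xs. 2*M \<le> minc n (xs!0) \<and> minc n (last xs) \<le> M} \<le> (1 + 1/real M)^N / 2^M"
proof -
  let ?T = "trajectory (G_nodes n) (G_out n) init N"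
  let ?A = "{xs. 2*M \<le> minc n (xs!0) \<and> minc n (last xs) \<le> M}"
  have "ennreal (2^M * measure_pmf.prob ?T ?A) = ennreal (2^M) * emeasure (measure_pmf ?T) ?A"
    by (simp add: ennreal_mult measure_pmf.emeasure_eq_measure)
  also have "\<dots> = (\<integral>\<^sup>+xs. ennreal (2^M) * indicator ?A xs \<partial>?T)"
    by (rule nn_integral_cmult_indicator[symmetric]) simp
  also have "\<dots> \<le> (\<integral>\<^sup>+xs. ennreal (Phi n M xs) \<partial>?T)"
  proof (intro nn_integral_mono)
    fix xs
    show "ennreal (2^M) * indicator ?A xs \<le> ennreal (Phi n M xs)"
    proof (cases "xs \<in> ?A")
      case True
      hence "max (minc n (last xs)) M = M" by simp
      hence "Phi n M xs = 2^M" using True by (simp add: Phi_def gpot_def)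
      thus ?thesis using True by simp
    qed simp
  qed
  also have "\<dots> \<le> ennreal ((1 + 1/real M)^N)" by (rule traj_pot[OF M])
  finally have "2^M * measure_pmf.prob ?T ?A \<le> (1 + 1/real M)^N"
    by (subst (asm) ennreal_le_iff) auto
  thus ?thesis by (simp add: field_simps)
qed

lemma init_col:
  assumes "0 \<le> q" "q \<le> 1" "i \<in> V" "finite V"
  shows "measure_pmf.prob (q_random_state V q col) {s. s i \<noteq> None} = q"
proof -
  have "measure_pmf.prob (q_random_state V q col) {s. s i \<noteq> None}
      = measure_pmf.prob (map_pmf (\<lambda>s. s i) (q_random_state V q col)) {x. x \<noteq> None}"
    by (simp add: vimage_def)
  also have "map_pmf (\<lambda>s. s i) (q_random_state V q col)
      = map_pmf (\<lambda>b. if b then Some (col i) else None) (bernoulli_pmf q)"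
    using assms by (simp add: q_random_state_def Pi_pmf_component)
  also have "measure_pmf.prob \<dots> {x. x \<noteq> None} = measure_pmf.prob (bernoulli_pmf q) {True}"
    by (simp add: vimage_def) (rule arg_cong[where f="measure_pmf.prob (bernoulli_pmf q)"], auto)
  also have "\<dots> = q" using assms by (simp add: measure_pmf_single)
  finally show ?thesis .
qed

lemma init_none:
  assumes "0 \<le> q" "q \<le> 1" "finite V"
  shows "measure_pmf.prob (q_random_state V q col) {s. \<forall>i\<in>V. s i = None} = (1-q) ^ card V"
proof -
  have eqS: "{s. \<forall>i\<in>V. s i = None} = Pi V (\<lambda>_. {None})" by (auto simp: Pi_def)
  have "measure_pmf.prob (q_random_state V q col) {s. \<forall>i\<in>V. s i = None}
     = (\<Prod>i\<in>V. measure_pmf.prob (map_pmf (\<lambda>b. if b then Some (col i) else None) (bernoulli_pmf q)) {None})"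
    unfolding q_random_state_def eqS by (rule measure_Pi_pmf_Pi[OF assms(3)])
  also have "\<dots> = (\<Prod>i\<in>V. 1 - q)"
  proof (rule prod.cong)
    fix i
    have "measure_pmf.prob (map_pmf (\<lambda>b. if b then Some (col i) else None) (bernoulli_pmf q)) {None}
        = measure_pmf.prob (bernoulli_pmf q) {False}"
      by (simp add: vimage_def) (rule arg_cong[where f="measure_pmf.prob (bernoulli_pmf q)"], auto)
    also have "\<dots> = 1 - q" using assms by (simp add: measure_pmf_single)
    finally show "measure_pmf.prob (map_pmf (\<lambda>b. if b then Some (col i) else None) (bernoulli_pmf q)) {None} = 1 - q" .
  qed simp
  finally show ?thesis by simp
qed



lemma exp_half_le_2: "exp (1/2::real) \<le> 2"
proof (rule ccontr)
  assume "\<not> ?thesis"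
  hence "2 < exp (1/2::real)" by simp
  hence "2 * 2 < exp (1/2::real) * exp (1/2)" by (intro mult_strict_mono) auto
  also have "\<dots> = exp 1" by (simp flip: exp_add)
  finally show False using exp_le by simp
qed

lemma main_n:
  fixes n :: nat and col :: "nat \<Rightarrow> color"
  assumes n2: "2 \<le> n"
    and a4: "4 \<le> sqrt (real n) / (2 * ln (real n))"
    and b: "4 \<le> real n / (64 * (ln (real n))^2)"
    and e1: "exp (- (sqrt (real n) / (16 * ln (real n)))) * ln (real n) \<le> 1"
    and e2: "exp (- sqrt (real n)) * ln (real n) \<le> 1"
    and sm: "sqrt (real n) / (ln (real n)) \<le> real n"
  shows "1 - 3 / ln (real n) \<le> prob_conv_time_ge (G_nodes n) (G_out n)
           (q_random_state (G_nodes n) (1 / sqrt (real n)) col) (1/64 * real n / (ln (real n))^2)"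
proof -
  define L where "L = ln (real n)"
  define sq where "sq = sqrt (real n)"
  define q where "q = 1 / sq"
  define x where "x = 1/64 * real n / L^2"
  define N where "N = nat \<lceil>x\<rceil>"
  define a where "a = sq / (2 * L)"
  define M where "M = nat \<lfloor>a\<rfloor>"
  define V where "V = G_nodes n"
  define init where "init = q_random_state V q col"
  define T where "T = trajectory V (G_out n) init N"
  have L0: "0 < L" using n2 by (simp add: L_def)
  have sq1: "1 \<le> sq" using n2 by (simp add: sq_def)
  have sqsq: "sq * sq = real n" by (simp add: sq_def)
  have q01: "0 \<le> q" "q \<le> 1" using sq1 by (auto simp: q_def)
  have a4': "4 \<le> a" using a4 by (simp add: a_def sq_def L_def)
  have Ma: "real M \<le> a" "a - 1 \<le> real M" using a4' floor_correct[of a] by (auto simp: M_def)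
  have M1: "1 \<le> M" using Ma a4' by linarith
  have x0: "0 \<le> x" by (simp add: x_def)
  have Nx: "real N \<le> x + 1" using ceiling_correct[of x] x0 by (simp add: N_def)
  have xN: "x \<le> real N" using ceiling_correct[of x] x0 by (simp add: N_def)
  have finV: "finite V" by (simp add: V_def G_nodes_def)
  have cardV: "card V = n" by (simp add: V_def G_nodes_def)
  have M2n: "2 * M \<le> n"
  proof -
    have "2 * real M \<le> 2 * a" using Ma by simp
    also have "\<dots> = sq / L" using L0 by (simp add: a_def)
    also have "\<dots> \<le> real n" using sm by (simp add: sq_def L_def)
    finally show ?thesis by linarith
  qed
  define Good where "Good = {xs. \<forall>t. real t < x \<longrightarrow> \<not> stable V (G_out n) (xs!t)}"
  define B1 where "B1 = {xs::state list. minc n (xs!0) < 2*M}"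
  define B2 where "B2 = {xs::state list. minc n (xs!0) = n+1}"
  define A where "A = {xs. 2*M \<le> minc n (xs!0) \<and> minc n (last xs) \<le> M}"
  have incl: "xs \<in> B1 \<union> B2 \<union> A" if xs: "xs \<in> set_pmf T" and ng: "xs \<notin> Good" for xs
  proof -
    from ng obtain t where t: "real t < x" "stable V (G_out n) (xs!t)" by (auto simp: Good_def)
    have tN: "t \<le> N" using t(1) xN by simp
    have len: "length xs = Suc N" using traj_len xs unfolding T_def by blast
    have xs': "xs \<in> set_pmf (trajectory (G_nodes n) (G_out n) init N)" using xs by (simp add: T_def V_def)
    have "minc n (xs!t) = 1 \<or> minc n (xs!t) = n + 1" using stable_minc t(2) by (simp add: V_def)
    thus ?thesis
    proof
      assume m1: "minc n (xs!t) = 1"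
      have "xs \<noteq> []" using len by auto
      hence "last xs = xs ! N" using len by (simp add: last_conv_nth)
      hence "minc n (last xs) \<le> minc n (xs!t)" using traj_mono[OF xs' _ order.refl, of t] tN by simp
      hence "minc n (last xs) \<le> M" using m1 M1 by simp
      thus ?thesis by (cases "minc n (xs!0) < 2*M") (auto simp: A_def B1_def)
    next
      assume "minc n (xs!t) = n + 1"
      hence "n + 1 \<le> minc n (xs!0)" using traj_mono[OF xs' _ tN, of 0] by simp
      hence "minc n (xs!0) = n + 1" using minc_le[of n "xs!0"] by simp
      thus ?thesis by (simp add: B2_def)
    qed
  qed
  have "measure_pmf.prob T (UNIV - Good) \<le> measure_pmf.prob T (B1 \<union> B2 \<union> A)"
    by (rule measure_pmf.finite_measure_mono_AE) (use incl in \<open>auto simp: AE_measure_pmf_iff\<close>)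
  also have "\<dots> \<le> measure_pmf.prob T (B1 \<union> B2) + measure_pmf.prob T A"
    by (rule measure_Un_le) auto
  also have "\<dots> \<le> measure_pmf.prob T B1 + measure_pmf.prob T B2 + measure_pmf.prob T A"
    using measure_Un_le[of B1 "measure_pmf T" B2] by simp
  also have "measure_pmf.prob T B1 \<le> 1 / L"
  proof -
    have "measure_pmf.prob T B1 = measure_pmf.prob init {s. minc n s < 2*M}"
      unfolding T_def B1_def by (rule traj_hd_prob)
    also have "\<dots> \<le> measure_pmf.prob init (\<Union>i\<in>{1..<2*M}. {s. s i \<noteq> None})"
    proof (rule measure_pmf.finite_measure_mono)
      show "{s. minc n s < 2*M} \<subseteq> (\<Union>i\<in>{1..<2*M}. {s. s i \<noteq> None})"
      proof
        fix s assume "s \<in> {s. minc n s < 2*M}"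
        hence "minc n s < 2*M" by simp
        moreover hence "s (minc n s) \<noteq> None" using M2n minc_col[of n s] by simp
        ultimately show "s \<in> (\<Union>i\<in>{1..<2*M}. {s. s i \<noteq> None})" using minc_ge1[of n s] by auto
      qed
    qed simp
    also have "\<dots> \<le> (\<Sum>i\<in>{1..<2*M}. measure_pmf.prob init {s. s i \<noteq> None})"
      by (rule measure_pmf.finite_measure_subadditive_finite) auto
    also have "\<dots> = (\<Sum>i\<in>{1..<2*M}. q)"
    proof (rule sum.cong)
      fix i assume "i \<in> {1..<2*M}"
      hence "i \<in> V" using M2n by (simp add: V_def G_nodes_def)
      thus "measure_pmf.prob init {s. s i \<noteq> None} = q"
        unfolding init_def by (rule init_col[OF q01 _ finV])
    qed simp
    also have "\<dots> = real (2*M - 1) * q" by simp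
    also have "\<dots> \<le> 2 * real M * q" using q01 M1 by (intro mult_right_mono) auto
    also have "\<dots> \<le> 2 * a * q" using q01 Ma by (intro mult_right_mono) auto
    also have "\<dots> = 1 / L" using sq1 L0 by (simp add: a_def q_def)
    finally show ?thesis .
  qed
  also have "measure_pmf.prob T B2 \<le> 1 / L"
  proof -
    have "measure_pmf.prob T B2 = measure_pmf.prob init {s. minc n s = n + 1}"
      unfolding T_def B2_def by (rule traj_hd_prob)
    also have "\<dots> \<le> measure_pmf.prob init {s. \<forall>i\<in>V. s i = None}"
    proof (rule measure_pmf.finite_measure_mono)
      show "{s. minc n s = n + 1} \<subseteq> {s. \<forall>i\<in>V. s i = None}"
      proof (intro subsetI CollectI ballI)
        fix s i assume s: "s \<in> {s. minc n s = n + 1}" and i: "i \<in> V"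
        have "1 \<le> i" "i < minc n s" using s i by (auto simp: V_def G_nodes_def)
        thus "s i = None" by (rule minc_below)
      qed
    qed simp
    also have "\<dots> = (1 - q) ^ n"
      unfolding init_def using init_none[OF q01 finV] cardV by simp
    also have "\<dots> \<le> exp (-q) ^ n"
      using q01 by (intro power_mono) (auto simp: exp_ge_add_one_self[of "-q", simplified])
    also have "\<dots> = exp (- sq)"
    proof -
      have "real n * (-q) = - sq" using sq1 sqsq by (simp add: q_def field_simps)
      thus ?thesis by (simp flip: exp_of_nat_mult)
    qed
    also have "\<dots> \<le> 1 / L" using e2 L0 by (simp add: sq_def L_def field_simps)
    finally show ?thesis .
  qed
  also have "measure_pmf.prob T A \<le> 1 / L"
  proof -
    have "measure_pmf.prob T A \<le> (1 + 1/real M)^N / 2^M"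
      unfolding T_def A_def V_def by (rule traj_A[OF M1])
    also have "\<dots> \<le> exp (real N / real M) / exp (real M / 2)"
    proof (rule frac_le)
      have "(1 + 1/real M)^N \<le> exp (1 / real M) ^ N"
        by (intro power_mono) (auto simp: add.commute)
      also have "\<dots> = exp (real N / real M)" by (simp flip: exp_of_nat_mult)
      finally show "(1 + 1/real M)^N \<le> exp (real N / real M)" .
      have "exp (real M / 2) = exp (1/2) ^ M" by (simp flip: exp_of_nat_mult)
      also have "\<dots> \<le> 2 ^ M" by (intro power_mono exp_half_le_2) simp
      finally show "exp (real M / 2) \<le> 2 ^ M" .
    qed auto
    also have "\<dots> = exp (real N / real M - real M / 2)" by (simp add: exp_diff)
    also have "\<dots> \<le> exp (- (sq / (16 * L)))"
    proof -
      have a2: "a * a = real n / (4 * L^2)" using sqsq L0 by (simp add: a_def power2_eq_square field_simps)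
      have M34: "3/4 * a \<le> real M" using Ma a4' by linarith
      have "real N \<le> real n / (64 * L^2) + 1" using Nx by (simp add: x_def)
      also have "\<dots> \<le> 5/4 * (real n / (64 * L^2))" using b by (simp add: L_def)
      also have "\<dots> = 5 * (real n / (256 * L^2))" by simp
      also have "\<dots> = 5/64 * (a * a)" using a2 by simp
      also have "\<dots> \<le> 5/36 * (real M * real M)"
      proof -
        have "(3/4*a) * (3/4*a) \<le> real M * real M" using M34 a4' by (intro mult_mono) auto
        thus ?thesis by simp
      qed
      finally have NM: "real N \<le> 5/36 * (real M * real M)" .
      have "real N / real M \<le> 5/36 * real M" using NM M1 by (simp add: divide_le_eq field_simps)
      hence "real N / real M - real M / 2 \<le> - (3/4 * a) / 3" using M34 by linarith
      also have "\<dots> \<le> - (sq / (16 * L))" using L0 sq1 by (simp add: a_def field_simps)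
      finally show ?thesis by simp
    qed
    also have "\<dots> \<le> 1 / L" using e1 L0 by (simp add: sq_def L_def field_simps)
    finally show ?thesis .
  qed
  finally have bad: "measure_pmf.prob T (UNIV - Good) \<le> 3 / L" by simp
  have "measure_pmf.prob T (UNIV - Good) = 1 - measure_pmf.prob T Good"
    using measure_pmf.prob_compl[of Good T] by simp
  hence "1 - 3 / L \<le> measure_pmf.prob T Good" using bad by simp
  thus ?thesis
    by (simp add: prob_conv_time_ge_def T_def Good_def N_def x_def init_def V_def q_def sq_def L_def)
qed


lemma ev_conds:
  "eventually (\<lambda>n::nat. 2 \<le> n \<and> 4 \<le> sqrt (real n) / (2 * ln (real n))
     \<and> 4 \<le> real n / (64 * (ln (real n))^2)
     \<and> exp (- (sqrt (real n) / (16 * ln (real n)))) * ln (real n) \<le> 1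
     \<and> exp (- sqrt (real n)) * ln (real n) \<le> 1
     \<and> sqrt (real n) / (ln (real n)) \<le> real n) sequentially"
proof -
  have r: "eventually (\<lambda>x::real. 4 \<le> sqrt x / (2 * ln x)
     \<and> 4 \<le> x / (64 * (ln x)^2)
     \<and> exp (- (sqrt x / (16 * ln x))) * ln x \<le> 1
     \<and> exp (- sqrt x) * ln x \<le> 1
     \<and> sqrt x / (ln x) \<le> x) at_top"
  proof (intro eventually_conj)
    show "eventually (\<lambda>x::real. 4 \<le> sqrt x / (2 * ln x)) at_top" by real_asymp
    show "eventually (\<lambda>x::real. 4 \<le> x / (64 * (ln x)^2)) at_top" by real_asymp
    show "eventually (\<lambda>x::real. exp (- (sqrt x / (16 * ln x))) * ln x \<le> 1) at_top" by real_asymp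
    show "eventually (\<lambda>x::real. exp (- sqrt x) * ln x \<le> 1) at_top" by real_asymp
    show "eventually (\<lambda>x::real. sqrt x / (ln x) \<le> x) at_top" by real_asymp
  qed
  have r': "eventually (\<lambda>n::nat. 4 \<le> sqrt (real n) / (2 * ln (real n))
     \<and> 4 \<le> real n / (64 * (ln (real n))^2)
     \<and> exp (- (sqrt (real n) / (16 * ln (real n)))) * ln (real n) \<le> 1
     \<and> exp (- sqrt (real n)) * ln (real n) \<le> 1
     \<and> sqrt (real n) / (ln (real n)) \<le> real n) sequentially"
    using filterlim_iff[THEN iffD1, OF filterlim_real_sequentially, rule_format, OF r] by simp
  have "eventually (\<lambda>n::nat. 2 \<le> n) sequentially" by (rule eventually_ge_at_top)
  thus ?thesis using r' by eventually_elim auto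
qed

theorem mainTheorem14:
  shows "\<exists>c>0. \<exists>\<epsilon>::nat \<Rightarrow> real. \<epsilon> \<longlonglongrightarrow> 0 \<and>
    (\<forall>n (col :: nat \<Rightarrow> color).
       prob_conv_time_ge (G_nodes n) (G_out n)
          (q_random_state (G_nodes n) (1 / sqrt (real n)) col)
          (c * real n / (ln (real n))\<^sup>2) \<ge> 1 - \<epsilon> n)"
proof -
  obtain n0 where n0: "\<And>n. n \<ge> n0 \<Longrightarrow> 2 \<le> n \<and> 4 \<le> sqrt (real n) / (2 * ln (real n))
     \<and> 4 \<le> real n / (64 * (ln (real n))^2)
     \<and> exp (- (sqrt (real n) / (16 * ln (real n)))) * ln (real n) \<le> 1
     \<and> exp (- sqrt (real n)) * ln (real n) \<le> 1
     \<and> sqrt (real n) / (ln (real n)) \<le> real n"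
    using ev_conds unfolding eventually_sequentially by blast
  define \<epsilon> where "\<epsilon> = (\<lambda>n::nat. if n \<ge> n0 then 3 / ln (real n) else 1)"
  have lim0: "((\<lambda>x::real. 3 / ln x) \<longlongrightarrow> 0) at_top" by real_asymp
  have lim1: "(\<lambda>n::nat. 3 / ln (real n)) \<longlonglongrightarrow> 0"
    using filterlim_compose[OF lim0 filterlim_real_sequentially] by (simp add: o_def)
  have "\<forall>n\<ge>n0. 3 / ln (real n) = \<epsilon> n" by (simp add: \<epsilon>_def)
  hence ev: "eventually (\<lambda>n. 3 / ln (real n) = \<epsilon> n) sequentially"
    unfolding eventually_sequentially by blast
  have lim: "\<epsilon> \<longlonglongrightarrow> 0" by (rule Lim_transform_eventually[OF lim1 ev])
  have bound: "1 - \<epsilon> n \<le> prob_conv_time_ge (G_nodes n) (G_out n)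
          (q_random_state (G_nodes n) (1 / sqrt (real n)) col) (1/64 * real n / (ln (real n))\<^sup>2)"
    for n col
  proof (cases "n \<ge> n0")
    case True
    hence c: "2 \<le> n \<and> 4 \<le> sqrt (real n) / (2 * ln (real n))
     \<and> 4 \<le> real n / (64 * (ln (real n))^2)
     \<and> exp (- (sqrt (real n) / (16 * ln (real n)))) * ln (real n) \<le> 1
     \<and> exp (- sqrt (real n)) * ln (real n) \<le> 1
     \<and> sqrt (real n) / (ln (real n)) \<le> real n" by (rule n0)
    have "1 - 3 / ln (real n) \<le> prob_conv_time_ge (G_nodes n) (G_out n)
          (q_random_state (G_nodes n) (1 / sqrt (real n)) col) (1/64 * real n / (ln (real n))\<^sup>2)"
      using c by (intro main_n) auto
    thus ?thesis using True by (simp add: \<epsilon>_def)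
  next
    case False
    thus ?thesis by (simp add: \<epsilon>_def prob_conv_time_ge_def)
  qed
  show ?thesis
    by (rule exI[of _ "1/64"], simp, rule exI[of _ \<epsilon>]) (use lim bound in auto)
qed

end
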